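(* Let $\mathcal{S}$ be a temporal feedback graph on $T$ rounds with maximal orders $C_1,\dots,C_N$, and let $\boldsymbol\mu^*$ be an optimal solution to the upper bound dual program (maximize $\sum_t\mu_t$ s.t. $\sum_{t\in C_c}\mu_t^2\le1$ for all $c$, $\mu\ge0$). Then there exists an optimal solution $\boldsymbol\lambda^*$ to the upper bound program (minimize $\sum_{c}\sqrt{\sum_{t\in C_c}\lambda_{c,t}^2}$ s.t. $\sum_c\lambda_{c,t}=1$ for all $t$, $\lambda_{c,t}=0$ if $t\notin C_c$, $\lambda\ge0$) such that: for every $c\in[N]$ with $\sum_{t\in C_c}(\mu^*_t)^2<1$ we have $\lambda^*_{c,t}=0$ for all $t\in[T]$, and for every $c\in[N]$ with $\sum_{t\in C_c}(\mu^*_t)^2=1$ there is a constant $\rho_c$ with $\lambda^*_{c,t}=\rho_c\mu^*_t$ for all $t$ (in $C_c$).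
   Context: A temporal feedback graph $\mathcal{S}$ is a collection of subsets $S_t\subseteq[T]\setminus\{t\}$, $t\in[T]$. A sequence of rounds $t_1,\dots,t_w$ is an order if $t_u\in S_{t_v}$ for all $u<v$; it is maximal if no super-sequence of it is an order. *)

theory Defs
  imports Complex_Main "HOL-Library.Sublist"
begin

definition temporal_feedback_graph :: "nat \<Rightarrow> (nat \<Rightarrow> nat set) \<Rightarrow> bool" where
  "temporal_feedback_graph T S \<longleftrightarrow> (\<forall>t\<in>{1..T}. S t \<subseteq> {1..T} - {t})"

definition is_order :: "nat \<Rightarrow> (nat \<Rightarrow> nat set) \<Rightarrow> nat list \<Rightarrow> bool" where
  "is_order T S xs \<longleftrightarrow> set xs \<subseteq> {1..T} \<and>
     (\<forall>u v. u < v \<and> v < length xs \<longrightarrow> xs ! u \<in> S (xs ! v))"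

definition is_maximal_order :: "nat \<Rightarrow> (nat \<Rightarrow> nat set) \<Rightarrow> nat list \<Rightarrow> bool" where
  "is_maximal_order T S xs \<longleftrightarrow> is_order T S xs \<and>
     \<not> (\<exists>ys. is_order T S ys \<and> subseq xs ys \<and> ys \<noteq> xs)"

definition maximal_orders :: "nat \<Rightarrow> (nat \<Rightarrow> nat set) \<Rightarrow> nat list set" where
  "maximal_orders T S = {xs. is_maximal_order T S xs}"

definition dual_feasible :: "nat \<Rightarrow> (nat \<Rightarrow> nat set) \<Rightarrow> (nat \<Rightarrow> real) \<Rightarrow> bool" where
  "dual_feasible T S \<mu> \<longleftrightarrow> (\<forall>t\<in>{1..T}. \<mu> t \<ge> 0) \<and>
     (\<forall>c\<in>maximal_orders T S. (\<Sum>t\<in>set c. (\<mu> t)\<^sup>2) \<le> 1)"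

definition dual_optimal :: "nat \<Rightarrow> (nat \<Rightarrow> nat set) \<Rightarrow> (nat \<Rightarrow> real) \<Rightarrow> bool" where
  "dual_optimal T S \<mu> \<longleftrightarrow> dual_feasible T S \<mu> \<and>
     (\<forall>\<nu>. dual_feasible T S \<nu> \<longrightarrow> (\<Sum>t\<in>{1..T}. \<nu> t) \<le> (\<Sum>t\<in>{1..T}. \<mu> t))"

definition primal_feasible :: "nat \<Rightarrow> (nat \<Rightarrow> nat set) \<Rightarrow> (nat list \<Rightarrow> nat \<Rightarrow> real) \<Rightarrow> bool" where
  "primal_feasible T S lam \<longleftrightarrow>
     (\<forall>t\<in>{1..T}. (\<Sum>c\<in>maximal_orders T S. lam c t) = 1) \<and>
     (\<forall>c\<in>maximal_orders T S. \<forall>t\<in>{1..T}. t \<notin> set c \<longrightarrow> lam c t = 0) \<and>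
     (\<forall>c\<in>maximal_orders T S. \<forall>t\<in>{1..T}. lam c t \<ge> 0)"

definition primal_objective :: "nat \<Rightarrow> (nat \<Rightarrow> nat set) \<Rightarrow> (nat list \<Rightarrow> nat \<Rightarrow> real) \<Rightarrow> real" where
  "primal_objective T S lam = (\<Sum>c\<in>maximal_orders T S. sqrt (\<Sum>t\<in>set c. (lam c t)\<^sup>2))"

definition primal_optimal :: "nat \<Rightarrow> (nat \<Rightarrow> nat set) \<Rightarrow> (nat list \<Rightarrow> nat \<Rightarrow> real) \<Rightarrow> bool" where
  "primal_optimal T S lam \<longleftrightarrow> primal_feasible T S lam \<and>
     (\<forall>lam'. primal_feasible T S lam' \<longrightarrow> primal_objective T S lam \<le> primal_objective T S lam')"

end

theory Submission imports Defs "HOL-Analysis.L2_Norm" begin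
definition ip :: "'a set \<Rightarrow> ('a \<Rightarrow> real) \<Rightarrow> ('a \<Rightarrow> real) \<Rightarrow> real" where
  "ip I x y = (\<Sum>t\<in>I. x t * y t)"

lemma ip_diff_left: "ip I (\<lambda>t. x t - c * y t) v = ip I x v - c * ip I y v"
  unfolding ip_def by (simp add: sum_subtractf sum_distrib_left algebra_simps)

lemma ip_diff_right: "ip I v (\<lambda>t. x t - c * y t) = ip I v x - c * ip I v y"
  unfolding ip_def by (simp add: sum_subtractf sum_distrib_left algebra_simps)

lemma ip_cong: "(\<And>t. t \<in> I \<Longrightarrow> x t = x' t) \<Longrightarrow> ip I v x = ip I v x'"
  unfolding ip_def by (rule sum.cong) auto

lemma farkas:
  fixes I :: "'a set" and K :: "'b set"
  assumes "finite K" and fI: "finite I"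
  shows "\<forall>a b. (\<exists>\<rho>. (\<forall>k\<in>K. \<rho> k \<ge> (0::real)) \<and> (\<forall>t\<in>I. b t = (\<Sum>k\<in>K. \<rho> k * a k t)))
     \<or> (\<exists>y. (\<forall>k\<in>K. ip I y (a k) \<le> 0) \<and> ip I y b > 0)"
  using assms(1)
proof (induction K rule: finite_induct)
  case empty
  show ?case
  proof (intro allI)
    fix a :: "'b \<Rightarrow> 'a \<Rightarrow> real" and b :: "'a \<Rightarrow> real"
    show "(\<exists>\<rho>. (\<forall>k\<in>{}. \<rho> k \<ge> (0::real)) \<and> (\<forall>t\<in>I. b t = (\<Sum>k\<in>{}. \<rho> k * a k t)))
     \<or> (\<exists>y. (\<forall>k\<in>{}. ip I y (a k) \<le> 0) \<and> ip I y b > 0)"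
    proof (cases "\<forall>t\<in>I. b t = 0")
      case True then show ?thesis by auto
    next
      case False
      then obtain t where t: "t \<in> I" "b t \<noteq> 0" by auto
      have "0 < ip I b b" unfolding ip_def
        by (rule sum_pos2[OF fI t(1)]) (use t in \<open>auto simp: zero_less_mult_iff\<close>)
      then show ?thesis by auto
    qed
  qed
next
  case (insert k0 K)
  show ?case
  proof (intro allI)
    fix a :: "'b \<Rightarrow> 'a \<Rightarrow> real" and b :: "'a \<Rightarrow> real"
    let ?L = "\<exists>\<rho>. (\<forall>k\<in>insert k0 K. \<rho> k \<ge> (0::real)) \<and> (\<forall>t\<in>I. b t = (\<Sum>k\<in>insert k0 K. \<rho> k * a k t))"
    let ?R = "\<exists>y. (\<forall>k\<in>insert k0 K. ip I y (a k) \<le> 0) \<and> ip I y b > 0"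
    show "?L \<or> ?R"
    proof (cases "\<exists>\<rho>. (\<forall>k\<in>K. \<rho> k \<ge> (0::real)) \<and> (\<forall>t\<in>I. b t = (\<Sum>k\<in>K. \<rho> k * a k t))")
      case True
      then obtain \<rho> where r: "\<forall>k\<in>K. \<rho> k \<ge> (0::real)" "\<forall>t\<in>I. b t = (\<Sum>k\<in>K. \<rho> k * a k t)" by blast
      have "\<forall>t\<in>I. b t = (\<Sum>k\<in>insert k0 K. (\<rho>(k0:=0)) k * a k t)"
      proof
        fix t assume "t \<in> I"
        have "(\<Sum>k\<in>K. (\<rho>(k0:=0)) k * a k t) = (\<Sum>k\<in>K. \<rho> k * a k t)"
          by (rule sum.cong) (use insert.hyps(2) in auto)
        then show "b t = (\<Sum>k\<in>insert k0 K. (\<rho>(k0:=0)) k * a k t)"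
          using r(2) \<open>t \<in> I\<close> insert.hyps by simp
      qed
      moreover have "\<forall>k\<in>insert k0 K. (\<rho>(k0:=0)) k \<ge> 0" using r(1) by auto
      ultimately show ?thesis by blast
    next
      case False
      then obtain y where y: "\<forall>k\<in>K. ip I y (a k) \<le> 0" "ip I y b > 0"
        using insert.IH by blast
      show ?thesis
      proof (cases "ip I y (a k0) \<le> 0")
        case True then show ?thesis using y by auto
      next
        case False
        define \<alpha> where "\<alpha> = ip I y (a k0)"
        have \<alpha>: "\<alpha> > 0" using False \<alpha>_def by simp
        define a' where "a' = (\<lambda>k t. a k t - (ip I y (a k) / \<alpha>) * a k0 t)"
        define b' where "b' = (\<lambda>t. b t - (ip I y b / \<alpha>) * a k0 t)"
        from insert.IH consider
          (L) \<rho> where "\<forall>k\<in>K. \<rho> k \<ge> (0::real)" "\<forall>t\<in>I. b' t = (\<Sum>k\<in>K. \<rho> k * a' k t)"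
          | (R) z where "\<forall>k\<in>K. ip I z (a' k) \<le> 0" "ip I z b' > 0"
          by blast
        then show ?thesis
        proof cases
          case L
          define \<rho>' where "\<rho>' = \<rho>(k0 := (ip I y b - (\<Sum>k\<in>K. \<rho> k * ip I y (a k))) / \<alpha>)"
          have "(\<Sum>k\<in>K. \<rho> k * ip I y (a k)) \<le> 0"
            using L(1) y(1) by (intro sum_nonpos) (simp add: mult_nonneg_nonpos)
          then have "\<rho>' k0 \<ge> 0" unfolding \<rho>'_def using y(2) \<alpha> by simp
          then have nn: "\<forall>k\<in>insert k0 K. \<rho>' k \<ge> 0" using L(1) insert.hyps(2) unfolding \<rho>'_def by auto
          have "\<forall>t\<in>I. b t = (\<Sum>k\<in>insert k0 K. \<rho>' k * a k t)"
          proof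
            fix t assume t: "t \<in> I"
            have s: "(\<Sum>k\<in>K. \<rho>' k * a k t) = (\<Sum>k\<in>K. \<rho> k * a k t)"
              unfolding \<rho>'_def by (rule sum.cong) (use insert.hyps(2) in auto)
            have "b t = b' t + (ip I y b / \<alpha>) * a k0 t" unfolding b'_def by simp
            also have "\<dots> = (\<Sum>k\<in>K. \<rho> k * a' k t) + (ip I y b / \<alpha>) * a k0 t" using L(2) t by simp
            also have "(\<Sum>k\<in>K. \<rho> k * a' k t) = (\<Sum>k\<in>K. \<rho> k * a k t) - (\<Sum>k\<in>K. \<rho> k * ip I y (a k)) / \<alpha> * a k0 t"
              unfolding a'_def by (simp add: algebra_simps sum_subtractf sum_distrib_left sum_distrib_right sum_divide_distrib)
            finally show "b t = (\<Sum>k\<in>insert k0 K. \<rho>' k * a k t)"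
              using insert.hyps s unfolding \<rho>'_def by (simp add: diff_divide_distrib right_diff_distrib left_diff_distrib)
          qed
          then show ?thesis using nn by blast
        next
          case R
          define w where "w = (\<lambda>t. z t - (ip I z (a k0) / \<alpha>) * y t)"
          have "\<forall>k\<in>insert k0 K. ip I w (a k) \<le> 0"
          proof
            fix k assume k: "k \<in> insert k0 K"
            show "ip I w (a k) \<le> 0"
            proof (cases "k = k0")
              case True
              then show ?thesis unfolding w_def ip_diff_left using \<alpha> \<alpha>_def by simp
            next
              case False
              then have "k \<in> K" using k by auto
              have "ip I w (a k) = ip I z (a' k)"
                unfolding w_def a'_def ip_diff_left ip_diff_right
                by (simp add: ip_def sum_distrib_left algebra_simps)
              then show ?thesis using R(1) \<open>k \<in> K\<close> by simp
            qed
          qed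
          moreover have "ip I w b = ip I z b'"
            unfolding w_def b'_def ip_diff_left ip_diff_right \<alpha>_def
            by (simp add: ip_def sum_distrib_left algebra_simps)
          ultimately show ?thesis using R(2) by auto
        qed
      qed
    qed
  qed
qed

lemma order_distinct:
  assumes G: "temporal_feedback_graph T S" and O: "is_order T S xs"
  shows "distinct xs"
proof -
  have "xs ! i \<noteq> xs ! j" if "i < j" "j < length xs" for i j
  proof -
    have "xs ! j \<in> {1..T}" using O that unfolding is_order_def by (meson nth_mem subsetD)
    moreover have "xs ! i \<in> S (xs ! j)" using O that unfolding is_order_def by blast
    ultimately show ?thesis using G unfolding temporal_feedback_graph_def by blast
  qed
  then show ?thesis unfolding distinct_conv_nth by (metis linorder_neqE_nat)
qed

lemma finite_M:
  assumes G: "temporal_feedback_graph T S"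
  shows "finite (maximal_orders T S)"
proof -
  have "maximal_orders T S \<subseteq> {xs. set xs \<subseteq> {1..T} \<and> length xs \<le> T}"
  proof
    fix xs assume "xs \<in> maximal_orders T S"
    then have O: "is_order T S xs" unfolding maximal_orders_def is_maximal_order_def by auto
    then have s: "set xs \<subseteq> {1..T}" unfolding is_order_def by auto
    have "length xs = card (set xs)" using order_distinct[OF G O] by (simp add: distinct_card)
    also have "\<dots> \<le> card {1..T}" using s by (intro card_mono) auto
    finally show "xs \<in> {xs. set xs \<subseteq> {1..T} \<and> length xs \<le> T}" using s by simp
  qed
  then show ?thesis by (rule finite_subset) (rule finite_lists_length_le, simp)
qed

lemma M_sub: "c \<in> maximal_orders T S \<Longrightarrow> set c \<subseteq> {1..T}"
  unfolding maximal_orders_def is_maximal_order_def is_order_def by auto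

lemma weak_duality:
  assumes fM: "finite (maximal_orders T S)"
    and D: "dual_feasible T S \<mu>" and P: "primal_feasible T S lam"
  shows "(\<Sum>t\<in>{1..T}. \<mu> t) \<le> primal_objective T S lam"
proof -
  let ?M = "maximal_orders T S"
  have "(\<Sum>t\<in>{1..T}. \<mu> t) = (\<Sum>t\<in>{1..T}. \<mu> t * (\<Sum>c\<in>?M. lam c t))"
    using P unfolding primal_feasible_def by simp
  also have "\<dots> = (\<Sum>c\<in>?M. \<Sum>t\<in>{1..T}. \<mu> t * lam c t)"
    by (simp add: sum_distrib_left) (rule sum.swap)
  also have "\<dots> \<le> (\<Sum>c\<in>?M. sqrt (\<Sum>t\<in>set c. (lam c t)\<^sup>2))"
  proof (rule sum_mono)
    fix c assume c: "c \<in> ?M"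
    have "(\<Sum>t\<in>{1..T}. \<mu> t * lam c t) = (\<Sum>t\<in>set c. \<mu> t * lam c t)"
      by (rule sum.mono_neutral_right) (use c P M_sub[OF c] in \<open>auto simp: primal_feasible_def\<close>)
    also have "\<dots> \<le> (\<Sum>t\<in>set c. \<bar>\<mu> t\<bar> * \<bar>lam c t\<bar>)"
      by (rule sum_mono) (metis abs_mult abs_ge_self)
    also have "\<dots> \<le> L2_set \<mu> (set c) * L2_set (lam c) (set c)" by (rule L2_set_mult_ineq)
    also have "\<dots> \<le> 1 * L2_set (lam c) (set c)"
    proof (rule mult_right_mono)
      show "L2_set \<mu> (set c) \<le> 1" using D c unfolding dual_feasible_def L2_set_def by simp
    qed (simp add: L2_set_def sum_nonneg)
    finally show "(\<Sum>t\<in>{1..T}. \<mu> t * lam c t) \<le> sqrt (\<Sum>t\<in>set c. (lam c t)\<^sup>2)"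
      by (simp add: L2_set_def)
  qed
  finally show ?thesis unfolding primal_objective_def .
qed

lemma ip_g:
  assumes "set c \<subseteq> I" "finite I"
  shows "ip I v (\<lambda>t. if t \<in> set c then \<mu> t else 0) = (\<Sum>t\<in>set c. v t * \<mu> t)"
  unfolding ip_def by (rule sum.mono_neutral_cong_right) (use assms in auto)

theorem lemma3:
  fixes T :: nat and S :: "nat \<Rightarrow> nat set" and \<mu> :: "nat \<Rightarrow> real"
  assumes "temporal_feedback_graph T S"
    and "dual_optimal T S \<mu>"
  shows "\<exists>lam. primal_optimal T S lam \<and>
    (\<forall>c\<in>maximal_orders T S.
       ((\<Sum>t\<in>set c. (\<mu> t)\<^sup>2) < 1 \<longrightarrow> (\<forall>t\<in>{1..T}. lam c t = 0)) \<and>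
       ((\<Sum>t\<in>set c. (\<mu> t)\<^sup>2) = 1 \<longrightarrow> (\<exists>\<rho>. \<forall>t\<in>set c. lam c t = \<rho> * \<mu> t)))"
proof -
  define I where "I = {1..T}"
  define M where "M = maximal_orders T S"
  define K where "K = {c\<in>M. (\<Sum>t\<in>set c. (\<mu> t)\<^sup>2) = 1}"
  define g where "g = (\<lambda>c t. if t \<in> set c then \<mu> t else (0::real))"
  have fI: "finite I" unfolding I_def by simp
  have fM: "finite M" unfolding M_def using finite_M[OF assms(1)] .
  have KM: "K \<subseteq> M" unfolding K_def by auto
  have fK: "finite K" using fM KM finite_subset by blast
  have DF: "dual_feasible T S \<mu>" using assms(2) unfolding dual_optimal_def by simp
  have mu_nn: "\<forall>t\<in>I. \<mu> t \<ge> 0" using DF unfolding dual_feasible_def I_def by simp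
  have cI: "set c \<subseteq> I" if "c \<in> M" for c using M_sub that unfolding M_def I_def by blast
  have ipg: "ip I v (g c) = (\<Sum>t\<in>set c. v t * \<mu> t)" if "c \<in> M" for c v
    unfolding g_def by (rule ip_g[OF cI[OF that] fI])
  from farkas[OF fK fI, THEN spec[where x=g], THEN spec[where x="\<lambda>_. 1"]] consider
      (L) \<rho> where "\<forall>k\<in>K. \<rho> k \<ge> 0" "\<forall>t\<in>I. 1 = (\<Sum>c\<in>K. \<rho> c * g c t)"
    | (R) y where "\<forall>k\<in>K. ip I y (g k) \<le> 0" "ip I y (\<lambda>_. 1) > 0"
    by blast
  then show ?thesis
  proof cases
    case R
    define Y where "Y = ip I y (\<lambda>_. 1)"
    have Y: "Y > 0" using R(2) Y_def by simp
    define m where "m = (\<Sum>t\<in>I. \<mu> t)"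
    have m0: "m \<ge> 0" unfolding m_def using mu_nn by (simp add: sum_nonneg)
    define \<delta> where "\<delta> = Y / (2*(m+1))"
    have \<delta>: "\<delta> > 0" unfolding \<delta>_def using Y m0 by simp
    have \<delta>m: "\<delta> * m < Y"
    proof -
      have "\<delta> * m = Y * (m / (2*(m+1)))" unfolding \<delta>_def by simp
      also have "\<dots> < Y * 1" using Y m0 by (intro mult_strict_left_mono) (auto simp: field_simps)
      finally show ?thesis by simp
    qed
    define d where "d = (\<lambda>t. y t - \<delta> * \<mu> t)"
    have dsum: "(\<Sum>t\<in>I. d t) > 0"
    proof -
      have "(\<Sum>t\<in>I. d t) = Y - \<delta> * m"
        unfolding d_def Y_def m_def ip_def by (simp add: sum_subtractf sum_distrib_left)
      then show ?thesis using \<delta>m by simp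
    qed
    have dK: "(\<Sum>t\<in>set c. d t * \<mu> t) \<le> - \<delta>" if c: "c \<in> K" for c
    proof -
      have cM: "c \<in> M" using c KM by auto
      have "(\<Sum>t\<in>set c. d t * \<mu> t) = ip I d (g c)" using ipg[OF cM] by simp
      also have "\<dots> = ip I y (g c) - \<delta> * ip I \<mu> (g c)" unfolding d_def ip_diff_left ..
      also have "ip I \<mu> (g c) = 1" using c unfolding ipg[OF cM] K_def by (simp add: power2_eq_square)
      finally show ?thesis using R(1) c by simp
    qed
    define D where "D = (\<Sum>t\<in>I. (d t)\<^sup>2)"
    define A where "A = (\<Sum>t\<in>I. \<bar>d t * \<mu> t\<bar>)"
    have D0: "D \<ge> 0" unfolding D_def by (simp add: sum_nonneg)
    have A0: "A \<ge> 0" unfolding A_def by (simp add: sum_nonneg)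
    define s where "s = Min (insert 1 ((\<lambda>c. 1 - (\<Sum>t\<in>set c. (\<mu> t)\<^sup>2)) ` (M - K)))"
    have fin: "finite (insert 1 ((\<lambda>c. 1 - (\<Sum>t\<in>set c. (\<mu> t)\<^sup>2)) ` (M - K)))" using fM by simp
    have s0: "s > 0" unfolding s_def
    proof (subst Min_gr_iff[OF fin], simp, intro ballI)
      fix x assume "x \<in> insert 1 ((\<lambda>c. 1 - (\<Sum>t\<in>set c. (\<mu> t)\<^sup>2)) ` (M - K))"
      then show "0 < x"
      proof
        assume "x \<in> (\<lambda>c. 1 - (\<Sum>t\<in>set c. (\<mu> t)\<^sup>2)) ` (M - K)"
        then obtain c where c: "c \<in> M" "c \<notin> K" "x = 1 - (\<Sum>t\<in>set c. (\<mu> t)\<^sup>2)" by auto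
        have "(\<Sum>t\<in>set c. (\<mu> t)\<^sup>2) \<le> 1" using DF c(1) unfolding dual_feasible_def M_def by auto
        moreover have "(\<Sum>t\<in>set c. (\<mu> t)\<^sup>2) \<noteq> 1" using c unfolding K_def by auto
        ultimately show ?thesis using c(3) by simp
      qed simp
    qed
    have sle: "(\<Sum>t\<in>set c. (\<mu> t)\<^sup>2) \<le> 1 - s" if "c \<in> M" "c \<notin> K" for c
    proof -
      have "s \<le> 1 - (\<Sum>t\<in>set c. (\<mu> t)\<^sup>2)" unfolding s_def by (rule Min_le[OF fin]) (use that in auto)
      then show ?thesis by simp
    qed
    define \<epsilon> where "\<epsilon> = min 1 (min (\<delta>/(D+1)) (s/(2*A+D+1)))"
    have e0: "\<epsilon> > 0" unfolding \<epsilon>_def using \<delta> s0 D0 A0 by simp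
    have e1: "\<epsilon> \<le> 1" unfolding \<epsilon>_def by simp
    have e2: "\<epsilon> * (D+1) \<le> \<delta>"
    proof -
      have "\<epsilon> \<le> \<delta>/(D+1)" unfolding \<epsilon>_def by simp
      then show ?thesis using D0 by (simp add: field_simps)
    qed
    have e3: "\<epsilon> * (2*A+D+1) \<le> s"
    proof -
      have "\<epsilon> \<le> s/(2*A+D+1)" unfolding \<epsilon>_def by simp
      then show ?thesis using D0 A0 by (simp add: field_simps)
    qed
    define \<nu> where "\<nu> = (\<lambda>t. \<bar>\<mu> t + \<epsilon> * d t\<bar>)"
    have expand: "(\<Sum>t\<in>set c. (\<nu> t)\<^sup>2) = (\<Sum>t\<in>set c. (\<mu> t)\<^sup>2) + 2 * \<epsilon> * (\<Sum>t\<in>set c. d t * \<mu> t)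
        + \<epsilon> * \<epsilon> * (\<Sum>t\<in>set c. (d t)\<^sup>2)" for c
    proof -
      have "(\<Sum>t\<in>set c. (\<nu> t)\<^sup>2) = (\<Sum>t\<in>set c. (\<mu> t)\<^sup>2 + 2 * \<epsilon> * (d t * \<mu> t) + \<epsilon> * \<epsilon> * (d t)\<^sup>2)"
        by (rule sum.cong) (simp_all add: \<nu>_def power2_eq_square algebra_simps)
      then show ?thesis by (simp add: sum.distrib sum_distrib_left)
    qed
    have Dle: "(\<Sum>t\<in>set c. (d t)\<^sup>2) \<le> D" if "c \<in> M" for c
      unfolding D_def by (rule sum_mono2[OF fI cI[OF that]]) simp
    have Ale: "(\<Sum>t\<in>set c. d t * \<mu> t) \<le> A" if "c \<in> M" for c
    proof -
      have "(\<Sum>t\<in>set c. d t * \<mu> t) \<le> (\<Sum>t\<in>set c. \<bar>d t * \<mu> t\<bar>)" by (rule sum_mono) simp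
      also have "\<dots> \<le> A" unfolding A_def by (rule sum_mono2[OF fI cI[OF that]]) simp
      finally show ?thesis .
    qed
    have Dc0: "(\<Sum>t\<in>set c. (d t)\<^sup>2) \<ge> 0" for c by (simp add: sum_nonneg)
    have feas: "dual_feasible T S \<nu>"
      unfolding dual_feasible_def
    proof (intro conjI ballI)
      fix t show "\<nu> t \<ge> 0" unfolding \<nu>_def by simp
    next
      fix c assume "c \<in> maximal_orders T S"
      then have cM: "c \<in> M" unfolding M_def .
      let ?X = "\<Sum>t\<in>set c. d t * \<mu> t"
      let ?Dc = "\<Sum>t\<in>set c. (d t)\<^sup>2"
      have q1: "\<epsilon> * \<epsilon> * ?Dc \<le> \<epsilon> * (\<epsilon> * D)"
        using Dle[OF cM] e0 by (simp add: mult_left_mono)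
      show "(\<Sum>t\<in>set c. (\<nu> t)\<^sup>2) \<le> 1"
      proof (cases "c \<in> K")
        case True
        have sq: "(\<Sum>t\<in>set c. (\<mu> t)\<^sup>2) = 1" using True unfolding K_def by simp
        have "2 * \<epsilon> * ?X \<le> 2 * \<epsilon> * (-\<delta>)" using dK[OF True] e0 by (intro mult_left_mono) auto
        moreover have "\<epsilon> * (\<epsilon> * D) \<le> \<epsilon> * \<delta>" using e2 e0 D0 e0
          by (intro mult_left_mono) (auto simp: algebra_simps)
        moreover have "\<epsilon> * \<delta> \<ge> 0" using e0 \<delta> by simp
        ultimately show ?thesis unfolding expand sq using q1 by linarith
      next
        case False
        have sq: "(\<Sum>t\<in>set c. (\<mu> t)\<^sup>2) \<le> 1 - s" using sle[OF cM False] .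
        have "2 * \<epsilon> * ?X \<le> 2 * \<epsilon> * A" using Ale[OF cM] e0 by (simp add: mult_left_mono)
        moreover have "\<epsilon> * (\<epsilon> * D) \<le> 1 * (\<epsilon> * D)" using e1 e0 D0
          by (intro mult_right_mono) auto
        moreover have "\<epsilon> * (2*A+D+1) = 2 * \<epsilon> * A + \<epsilon> * D + \<epsilon>" by (simp add: algebra_simps)
        ultimately show ?thesis unfolding expand using sq q1 e3 e0 by linarith
      qed
    qed
    have "(\<Sum>t\<in>{1..T}. \<nu> t) \<le> (\<Sum>t\<in>{1..T}. \<mu> t)"
      using assms(2) feas unfolding dual_optimal_def by blast
    moreover have "(\<Sum>t\<in>I. \<mu> t + \<epsilon> * d t) \<le> (\<Sum>t\<in>I. \<nu> t)"
      unfolding \<nu>_def by (rule sum_mono) simp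
    moreover have "(\<Sum>t\<in>I. \<mu> t + \<epsilon> * d t) = m + \<epsilon> * (\<Sum>t\<in>I. d t)"
      unfolding m_def by (simp add: sum.distrib sum_distrib_left)
    moreover have "\<epsilon> * (\<Sum>t\<in>I. d t) > 0" using e0 dsum by simp
    ultimately show ?thesis unfolding I_def m_def by linarith
  next
    case L
    define lam where "lam = (\<lambda>c t. if c \<in> K \<and> t \<in> set c then \<rho> c * \<mu> t else 0)"
    have sumK: "(\<Sum>c\<in>M. f c) = (\<Sum>c\<in>K. f c)" if "\<And>c. c \<in> M - K \<Longrightarrow> f c = 0" for f :: "nat list \<Rightarrow> real"
      by (rule sum.mono_neutral_right) (use fM KM that in auto)
    have PF: "primal_feasible T S lam"
      unfolding primal_feasible_def
    proof (intro conjI ballI impI)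
      fix t assume t: "t \<in> {1..T}"
      have "(\<Sum>c\<in>maximal_orders T S. lam c t) = (\<Sum>c\<in>K. lam c t)"
        unfolding M_def[symmetric] by (rule sumK) (simp add: lam_def)
      also have "\<dots> = (\<Sum>c\<in>K. \<rho> c * g c t)"
        by (rule sum.cong) (auto simp: lam_def g_def)
      finally show "(\<Sum>c\<in>maximal_orders T S. lam c t) = 1" using L(2) t unfolding I_def by simp
    next
      fix c t assume "c \<in> maximal_orders T S" "t \<in> {1..T}" "t \<notin> set c" then show "lam c t = 0" by (simp add: lam_def)
    next
      fix c t assume "c \<in> maximal_orders T S" "t \<in> {1..T}"
      then show "lam c t \<ge> 0" using L(1) mu_nn unfolding lam_def I_def by auto
    qed
    have obj: "primal_objective T S lam = (\<Sum>c\<in>K. \<rho> c)"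
    proof -
      have "primal_objective T S lam = (\<Sum>c\<in>K. sqrt (\<Sum>t\<in>set c. (lam c t)\<^sup>2))"
        unfolding primal_objective_def M_def[symmetric] by (rule sumK) (simp add: lam_def K_def)
      also have "\<dots> = (\<Sum>c\<in>K. \<rho> c)"
      proof (rule sum.cong)
        fix c assume c: "c \<in> K"
        have "(\<Sum>t\<in>set c. (lam c t)\<^sup>2) = (\<Sum>t\<in>set c. (\<rho> c)\<^sup>2 * (\<mu> t)\<^sup>2)"
          by (rule sum.cong) (use c in \<open>auto simp: lam_def power_mult_distrib\<close>)
        also have "\<dots> = (\<rho> c)\<^sup>2" using c unfolding K_def by (simp add: sum_distrib_left[symmetric])
        finally show "sqrt (\<Sum>t\<in>set c. (lam c t)\<^sup>2) = \<rho> c" using L(1) c by simp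
      qed simp
      finally show ?thesis .
    qed
    have musum: "(\<Sum>t\<in>{1..T}. \<mu> t) = (\<Sum>c\<in>K. \<rho> c)"
    proof -
      have "(\<Sum>t\<in>{1..T}. \<mu> t) = (\<Sum>t\<in>I. \<mu> t * (\<Sum>c\<in>K. \<rho> c * g c t))"
        using L(2) unfolding I_def by simp
      also have "\<dots> = (\<Sum>c\<in>K. \<rho> c * ip I \<mu> (g c))"
        unfolding ip_def by (simp add: sum_distrib_left sum.swap[of _ I] algebra_simps)
      also have "\<dots> = (\<Sum>c\<in>K. \<rho> c)"
      proof (rule sum.cong)
        fix c assume c: "c \<in> K"
        then have "c \<in> M" using KM by auto
        then have "ip I \<mu> (g c) = 1" using c unfolding ipg[OF \<open>c \<in> M\<close>] K_def by (simp add: power2_eq_square)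
        then show "\<rho> c * ip I \<mu> (g c) = \<rho> c" by simp
      qed simp
      finally show ?thesis .
    qed
    have "primal_optimal T S lam"
      unfolding primal_optimal_def using PF obj musum weak_duality[OF finite_M[OF assms(1)] DF] by auto
    moreover have "\<forall>c\<in>maximal_orders T S.
       ((\<Sum>t\<in>set c. (\<mu> t)\<^sup>2) < 1 \<longrightarrow> (\<forall>t\<in>{1..T}. lam c t = 0)) \<and>
       ((\<Sum>t\<in>set c. (\<mu> t)\<^sup>2) = 1 \<longrightarrow> (\<exists>\<rho>. \<forall>t\<in>set c. lam c t = \<rho> * \<mu> t))"
      unfolding lam_def K_def M_def by auto
    ultimately show ?thesis by blast
  qed
qed

end
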